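(* For each $(\varepsilon,\delta)\in(0,1)\times(0,\delta_0]$, $$\mathcal R^\ast(\varepsilon,\delta|p_{X_1X_2},p_{K_1K_2})\subseteq\mathcal R_{\rm sw}(p_{X_1X_2}).$$
   Context: All logarithms are base 2. $\mathcal X_1,\mathcal X_2$ are finite fields. $(X_1,X_2)$ has joint pmf $p_{X_1X_2}$ on $\mathcal X_1\times\mathcal X_2$ and $(K_1,K_2)$ has joint pmf $p_{K_1K_2}$ on $\mathcal X_1\times\mathcal X_2$. For block length $n$, $(\mathbf X_1,\mathbf X_2)$ is i.i.d. with law $p^n_{X_1X_2}$ (source), $(\mathbf K_1,\mathbf K_2)$ is i.i.d. with law $p^n_{K_1K_2}$ (keys), and the keys are independent of the sources. A distributed source encryption system at block length $n$ consists of finite sets $\mathcal C_i^{(n)}$, encryption maps $\Phi_i^{(n)}:\mathcal X_i^n\times\mathcal X_i^n\to\mathcal C_i^{(n)}$ (key, plaintext) and a decryption map $\Psi^{(n)}:\mathcal X_1^n\times\mathcal X_2^n\times\mathcal C_1^{(n)}\times\mathcal C_2^{(n)}\to\mathcal X_1^n\times\mathcal X_2^n$, such that there exist maps $\phi_i^{(n)}:\mathcal X_i^n\to\mathcal M_i^{(n)}$ (finite $\mathcal M_i^{(n)}$) and $\psi^{(n)}$ with $\Psi^{(n)}(\mathbf k_1,\mathbf k_2,\Phi_1^{(n)}(\mathbf k_1,\mathbf x_1),\Phi_2^{(n)}(\mathbf k_2,\mathbf x_2))=\psi^{(n)}(\phi_1^{(n)}(\mathbf x_1),\phi_2^{(n)}(\mathbf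 x_2))$ for all keys and plaintexts. Ciphertexts: $C_i^{(n)}=\Phi_i^{(n)}(\mathbf K_i,\mathbf X_i)$. Correct decoding set $\mathcal D^{(n)}:=\{(\mathbf x_1,\mathbf x_2):\psi^{(n)}(\phi_1^{(n)}(\mathbf x_1),\phi_2^{(n)}(\mathbf x_2))=(\mathbf x_1,\mathbf x_2)\}$; error probability $p_{\rm e}:=\Pr[(\mathbf X_1,\mathbf X_2)\notin\mathcal D^{(n)}]$. Fix a constant $\delta_0>0$. For $(\varepsilon,\delta)\in(0,1)\times[0,\delta_0]$, $(R_1,R_2)$ is an $(\varepsilon,\delta)$-reliable and secure rate pair if there is a sequence of systems $\{(\Phi_1^{(n)},\Phi_2^{(n)},\Psi^{(n)})\}_{n\ge1}$ such that for every $\gamma>0$ there is $n_0$ with, for all $n\ge n_0$: $\frac1n\log|\mathcal C_i^{(n)}|\le R_i+\gamma$ ($i=1,2$), $p_{\rm e}\le\varepsilon$, and $I(C_1^{(n)}C_2^{(n)};\mathbf X_1\mathbf X_2)\le\delta$. $\mathcal R^\ast(\varepsilon,\delta|p_{X_1X_2},p_{K_1K_2})$ is the set of such pairs. $\mathcal R_{\rm sw}(p_{X_1X_2}):=\{(R_1,R_2):R_1\ge H(X_1|X_2),R_2\ge H(X_2|X_1),R_1+R_2\ge H(X_1X_2)\}$. *)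

theory Defs
  imports "HOL-Probability.Probability"
begin

definition entropy2 :: "'a pmf \<Rightarrow> real" where
  "entropy2 q = - (\<Sum>z\<in>set_pmf q. pmf q z * log 2 (pmf q z))"

definition mutual_info2 :: "('a \<times> 'b) pmf \<Rightarrow> real" where
  "mutual_info2 q = (\<Sum>z\<in>set_pmf q. pmf q z *
      log 2 (pmf q z / (pmf (map_pmf fst q) (fst z) * pmf (map_pmf snd q) (snd z))))"

definition iid_block :: "nat \<Rightarrow> ('a \<times> 'b) pmf \<Rightarrow> ('a list \<times> 'b list) pmf" where
  "iid_block n p = map_pmf (\<lambda>zs. (map fst zs, map snd zs)) (replicate_pmf n p)"

text \<open>Valid distributed source encryption system at block length n
  (finite sets are represented as finite subsets of nat).
  Phi_i takes (key, plaintext); Psi takes (k1, k2, c1, c2).\<close>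
definition is_dse_system ::
  "nat \<Rightarrow> nat set \<Rightarrow> nat set
   \<Rightarrow> ('a list \<Rightarrow> 'a list \<Rightarrow> nat) \<Rightarrow> ('b list \<Rightarrow> 'b list \<Rightarrow> nat)
   \<Rightarrow> ('a list \<Rightarrow> 'b list \<Rightarrow> nat \<Rightarrow> nat \<Rightarrow> 'a list \<times> 'b list)
   \<Rightarrow> nat set \<Rightarrow> nat set \<Rightarrow> ('a list \<Rightarrow> nat) \<Rightarrow> ('b list \<Rightarrow> nat)
   \<Rightarrow> (nat \<Rightarrow> nat \<Rightarrow> 'a list \<times> 'b list) \<Rightarrow> bool" where
  "is_dse_system n C1 C2 Phi1 Phi2 Psi M1 M2 phi1 phi2 psi \<longleftrightarrow>
     finite C1 \<and> finite C2 \<and> finite M1 \<and> finite M2 \<and>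
     (\<forall>k x. length k = n \<longrightarrow> length x = n \<longrightarrow> Phi1 k x \<in> C1) \<and>
     (\<forall>k x. length k = n \<longrightarrow> length x = n \<longrightarrow> Phi2 k x \<in> C2) \<and>
     (\<forall>x. length x = n \<longrightarrow> phi1 x \<in> M1) \<and>
     (\<forall>x. length x = n \<longrightarrow> phi2 x \<in> M2) \<and>
     (\<forall>k1 k2 x1 x2. length k1 = n \<longrightarrow> length k2 = n \<longrightarrow> length x1 = n \<longrightarrow> length x2 = n \<longrightarrow>
        Psi k1 k2 (Phi1 k1 x1) (Phi2 k2 x2) = psi (phi1 x1) (phi2 x2))"

definition cipher_source_joint ::
  "nat \<Rightarrow> ('a \<times> 'b) pmf \<Rightarrow> ('a \<times> 'b) pmf
   \<Rightarrow> ('a list \<Rightarrow> 'a list \<Rightarrow> nat) \<Rightarrow> ('b list \<Rightarrow> 'b list \<Rightarrow> nat)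
   \<Rightarrow> ((nat \<times> nat) \<times> ('a list \<times> 'b list)) pmf" where
  "cipher_source_joint n pX pK Phi1 Phi2 =
     do { x \<leftarrow> iid_block n pX; k \<leftarrow> iid_block n pK;
          return_pmf ((Phi1 (fst k) (fst x), Phi2 (snd k) (snd x)), x) }"

definition error_prob ::
  "nat \<Rightarrow> ('a \<times> 'b) pmf \<Rightarrow> ('a list \<Rightarrow> nat) \<Rightarrow> ('b list \<Rightarrow> nat)
   \<Rightarrow> (nat \<Rightarrow> nat \<Rightarrow> 'a list \<times> 'b list) \<Rightarrow> real" where
  "error_prob n pX phi1 phi2 psi =
     measure_pmf.prob (iid_block n pX) {x. psi (phi1 (fst x)) (phi2 (snd x)) \<noteq> x}"

definition reliable_secure_region ::
  "real \<Rightarrow> real \<Rightarrow> ('a::{finite,field} \<times> 'b::{finite,field}) pmf \<Rightarrow> ('a \<times> 'b) pmf \<Rightarrow> (real \<times> real) set" where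
  "reliable_secure_region eps delta pX pK = {(R1, R2).
     \<exists>(C1 :: nat \<Rightarrow> nat set) (C2 :: nat \<Rightarrow> nat set)
      (Phi1 :: nat \<Rightarrow> 'a list \<Rightarrow> 'a list \<Rightarrow> nat) (Phi2 :: nat \<Rightarrow> 'b list \<Rightarrow> 'b list \<Rightarrow> nat)
      (Psi :: nat \<Rightarrow> 'a list \<Rightarrow> 'b list \<Rightarrow> nat \<Rightarrow> nat \<Rightarrow> 'a list \<times> 'b list)
      (M1 :: nat \<Rightarrow> nat set) (M2 :: nat \<Rightarrow> nat set)
      (phi1 :: nat \<Rightarrow> 'a list \<Rightarrow> nat) (phi2 :: nat \<Rightarrow> 'b list \<Rightarrow> nat)
      (psi :: nat \<Rightarrow> nat \<Rightarrow> nat \<Rightarrow> 'a list \<times> 'b list).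
       (\<forall>n. is_dse_system n (C1 n) (C2 n) (Phi1 n) (Phi2 n) (Psi n) (M1 n) (M2 n)
                (phi1 n) (phi2 n) (psi n)) \<and>
       (\<forall>\<gamma>>0. \<exists>n0. \<forall>n\<ge>n0.
          log 2 (real (card (C1 n))) / real n \<le> R1 + \<gamma> \<and>
          log 2 (real (card (C2 n))) / real n \<le> R2 + \<gamma> \<and>
          error_prob n pX (phi1 n) (phi2 n) (psi n) \<le> eps \<and>
          mutual_info2 (cipher_source_joint n pX pK (Phi1 n) (Phi2 n)) \<le> delta)}"

text \<open>Slepian--Wolf region.  H(X1|X2) = H(X1X2) - H(X2), H(X2|X1) = H(X1X2) - H(X1).\<close>
definition sw_region :: "('a \<times> 'b) pmf \<Rightarrow> (real \<times> real) set" where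
  "sw_region p = {(R1, R2).
     R1 \<ge> entropy2 p - entropy2 (map_pmf snd p) \<and>
     R2 \<ge> entropy2 p - entropy2 (map_pmf fst p) \<and>
     R1 + R2 \<ge> entropy2 p}"

end

theory Submission
  imports Defs
begin


lemma replicate_pmf_Suc_map:
  "replicate_pmf (Suc n) p = map_pmf (\<lambda>(x,xs). x#xs) (pair_pmf p (replicate_pmf n p))"
  by (simp add: pair_pmf_def map_pmf_def bind_assoc_pmf bind_return_pmf)

lemma pmf_replicate_pmf:
  "pmf (replicate_pmf n p) xs = (if length xs = n then (\<Prod>x\<leftarrow>xs. pmf p x) else 0)"
proof (induction n arbitrary: xs)
  case 0
  then show ?case by (cases xs) (auto simp: pmf_return)
next
  case (Suc n)
  show ?case
  proof (cases xs)
    case Nil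
    have "[] \<notin> set_pmf (replicate_pmf (Suc n) p)"
      unfolding set_replicate_pmf by simp
    then show ?thesis using Nil by (simp only: set_pmf_iff) simp
  next
    case (Cons y ys)
    have inj: "inj (\<lambda>(x::'a,xs). x#xs)" by (auto simp: inj_def)
    have "pmf (replicate_pmf (Suc n) p) xs = pmf (pair_pmf p (replicate_pmf n p)) (y, ys)"
      unfolding replicate_pmf_Suc_map Cons
      using pmf_map_inj'[OF inj, of "pair_pmf p (replicate_pmf n p)" "(y,ys)"] by simp
    then show ?thesis using Suc.IH[of ys] Cons by (simp add: pmf_pair)
  qed
qed

lemma sum_lists_prod:
  fixes h :: "'a::finite \<Rightarrow> real"
  shows "(\<Sum>xs\<in>{xs. length xs = n}. (\<Prod>x\<leftarrow>xs. h x)) = (\<Sum>x\<in>UNIV. h x) ^ n"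
proof (induction n)
  case 0
  then show ?case by simp
next
  case (Suc n)
  have eq: "{xs::'a list. length xs = Suc n} = (\<lambda>(x,xs). x#xs) ` (UNIV \<times> {xs. length xs = n})"
    by (auto simp: length_Suc_conv image_iff)
  have inj: "inj_on (\<lambda>(x::'a,xs). x#xs) (UNIV \<times> {xs. length xs = n})" by (auto simp: inj_on_def)
  have "(\<Sum>xs\<in>{xs::'a list. length xs = Suc n}. (\<Prod>x\<leftarrow>xs. h x))
      = (\<Sum>(x,xs)\<in>UNIV \<times> {xs. length xs = n}. h x * (\<Prod>x\<leftarrow>xs. h x))"
    unfolding eq by (subst sum.reindex[OF inj]) (simp add: case_prod_unfold)
  also have "\<dots> = (\<Sum>x\<in>UNIV. h x) * (\<Sum>xs\<in>{xs. length xs = n}. (\<Prod>x\<leftarrow>xs. h x))"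
    by (simp add: sum_product sum.cartesian_product)
  finally show ?case using Suc.IH by simp
qed



lemma finite_len_lists: "finite {xs::'a::finite list. length xs = n}"
  using finite_lists_length_eq[of "UNIV::'a set" n] by simp

lemma pointwise_bound:
  fixes P Q t a :: real
  assumes "0 \<le> P" "0 \<le> Q" "P > 0 \<Longrightarrow> Q > 0" "t > 0" "a > 1"
  shows "P \<le> t * Q + P powr a * Q powr (1 - a) * t powr (1 - a)"
proof (cases "P \<le> t * Q")
  case True
  then show ?thesis using assms by (simp add: add_increasing2)
next
  case False
  then have P: "P > 0" using assms by (smt (verit) mult_nonneg_nonneg)
  then have Q: "Q > 0" using assms by blast
  have r: "P / (t * Q) \<ge> 1" using False Q assms by (simp add: field_simps)
  have "P powr a * Q powr (1 - a) * t powr (1 - a) = P * (P / (t * Q)) powr (a - 1)"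
  proof -
    have "P powr a = P * P powr (a - 1)" using P by (simp add: powr_diff powr_add[symmetric] powr_one[symmetric])
    moreover have "(P / (t * Q)) powr (a - 1) = P powr (a - 1) / (t powr (a - 1) * Q powr (a - 1))"
      using P Q assms by (simp add: powr_divide powr_mult)
    moreover have "Q powr (1 - a) = 1 / Q powr (a - 1)" "t powr (1 - a) = 1 / t powr (a - 1)"
      using Q assms by (simp_all add: powr_minus_divide[symmetric] powr_minus)
    ultimately show ?thesis by simp
  qed
  also have "\<dots> \<ge> P" using r P assms by (simp add: ge_one_powr_ge_zero)
  finally show ?thesis using assms Q by (smt (verit) mult_nonneg_nonneg)
qed

lemma prod_list_map_nonneg: "(\<And>x. f x \<ge> (0::real)) \<Longrightarrow> 0 \<le> (\<Prod>x\<leftarrow>xs. f x)"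
  by (induction xs) auto

lemma prod_list_map_mult: "(\<Prod>x\<leftarrow>xs. f x) * (\<Prod>x\<leftarrow>xs. g x) = (\<Prod>x\<leftarrow>xs. f x * (g x::real))"
  by (induction xs) (auto simp: algebra_simps)

lemma prod_list_powr:
  "(\<forall>x\<in>set xs. f x \<ge> (0::real)) \<Longrightarrow> (\<Prod>x\<leftarrow>xs. f x) powr a = (\<Prod>x\<leftarrow>xs. f x powr a)"
  by (induction xs) (auto simp: powr_mult prod_list_nonneg)

lemma block_bound:
  fixes p :: "'z::finite pmf" and g :: "'z \<Rightarrow> real"
  assumes g0: "\<And>z. g z \<ge> 0" and gpos: "\<And>z. z \<in> set_pmf p \<Longrightarrow> g z > 0"
    and t: "t > 0" and a: "a > 1" and D: "D \<subseteq> {xs. length xs = n}"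
  shows "(\<Sum>xs\<in>D. pmf (replicate_pmf n p) xs)
     \<le> t * (\<Sum>xs\<in>D. (\<Prod>x\<leftarrow>xs. g x))
       + t powr (1 - a) * (\<Sum>z\<in>UNIV. pmf p z powr a * g z powr (1 - a)) ^ n"
proof -
  have finD: "finite D" using D finite_len_lists finite_subset by blast
  define h where "h z = pmf p z powr a * g z powr (1 - a)" for z
  have h0: "h z \<ge> 0" for z by (simp add: h_def)
  have pt: "pmf (replicate_pmf n p) xs \<le> t * (\<Prod>x\<leftarrow>xs. g x) + t powr (1 - a) * (\<Prod>x\<leftarrow>xs. h x)"
    if "xs \<in> D" for xs
  proof -
    have len: "length xs = n" using that D by auto
    have P: "pmf (replicate_pmf n p) xs = (\<Prod>x\<leftarrow>xs. pmf p x)" using len by (simp add: pmf_replicate_pmf)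
    have Qpos: "(\<Prod>x\<leftarrow>xs. g x) > 0" if "(\<Prod>x\<leftarrow>xs. pmf p x) > 0"
    proof -
      have "\<forall>x\<in>set xs. pmf p x \<noteq> 0"
      proof
        fix x assume "x \<in> set xs"
        then have "pmf p x = 0 \<Longrightarrow> 0 \<in> set (map (pmf p) xs)" by force
        then show "pmf p x \<noteq> 0" using that prod_list_zero_iff[of "map (pmf p) xs"] by auto
      qed
      then have "\<forall>x\<in>set xs. g x > 0" using gpos by (auto simp: set_pmf_iff)
      then show ?thesis by (induction xs) auto
    qed
    have "(\<Prod>x\<leftarrow>xs. pmf p x) \<le> t * (\<Prod>x\<leftarrow>xs. g x)
        + (\<Prod>x\<leftarrow>xs. pmf p x) powr a * (\<Prod>x\<leftarrow>xs. g x) powr (1 - a) * t powr (1 - a)"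
      by (rule pointwise_bound) (use Qpos t a g0 in \<open>auto intro: prod_list_map_nonneg\<close>)
    also have "(\<Prod>x\<leftarrow>xs. pmf p x) powr a * (\<Prod>x\<leftarrow>xs. g x) powr (1 - a) = (\<Prod>x\<leftarrow>xs. h x)"
      by (simp add: prod_list_powr g0 h_def prod_list_map_mult)
    finally show ?thesis using P by (simp add: mult.commute)
  qed
  have "(\<Sum>xs\<in>D. pmf (replicate_pmf n p) xs) \<le> (\<Sum>xs\<in>D. t * (\<Prod>x\<leftarrow>xs. g x) + t powr (1 - a) * (\<Prod>x\<leftarrow>xs. h x))"
    by (rule sum_mono) (rule pt)
  also have "\<dots> = t * (\<Sum>xs\<in>D. (\<Prod>x\<leftarrow>xs. g x)) + t powr (1 - a) * (\<Sum>xs\<in>D. (\<Prod>x\<leftarrow>xs. h x))"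
    by (simp add: sum.distrib sum_distrib_left)
  also have "(\<Sum>xs\<in>D. (\<Prod>x\<leftarrow>xs. h x)) \<le> (\<Sum>xs\<in>{xs. length xs = n}. (\<Prod>x\<leftarrow>xs. h x))"
    by (rule sum_mono2[OF finite_len_lists D]) (simp add: prod_list_map_nonneg h0)
  also have "\<dots> = (\<Sum>z\<in>UNIV. h z) ^ n" by (rule sum_lists_prod)
  finally show ?thesis unfolding h_def by (simp add: mult_left_mono)
qed



lemma exists_alpha:
  fixes p :: "'z::finite pmf" and g :: "'z \<Rightarrow> real" and c :: real
  assumes g0: "\<And>z. g z \<ge> 0" and gpos: "\<And>z. z \<in> set_pmf p \<Longrightarrow> g z > 0"
    and neg: "(\<Sum>z\<in>set_pmf p. pmf p z * (ln (pmf p z) - ln (g z))) + c * ln 2 < 0"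
  shows "\<exists>a>1. (\<Sum>z\<in>UNIV. pmf p z powr a * g z powr (1 - a)) * 2 powr ((a - 1) * c) < 1"
proof -
  define S where "S = set_pmf p"
  have finS: "finite S" unfolding S_def by simp
  define F where "F a = (\<Sum>z\<in>S. exp (a * ln (pmf p z) + (1 - a) * ln (g z))) * exp ((a - 1) * c * ln 2)" for a
  have pp: "z \<in> S \<Longrightarrow> pmf p z > 0" for z unfolding S_def by (simp add: pmf_positive)
  have F1: "F 1 = 1"
    unfolding F_def using pp by (simp add: S_def sum_pmf_eq_1)
  have "(F has_real_derivative
      ((\<Sum>z\<in>S. exp (1 * ln (pmf p z) + (1 - 1) * ln (g z)) * (ln (pmf p z) - ln (g z))) * exp ((1 - 1) * c * ln 2)
       + (\<Sum>z\<in>S. exp (1 * ln (pmf p z) + (1 - 1) * ln (g z))) * (exp ((1 - 1) * c * ln 2) * (c * ln 2)))) (at 1)"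
    unfolding F_def
    by (auto intro!: derivative_eq_intros simp: algebra_simps)
  also have "((\<Sum>z\<in>S. exp (1 * ln (pmf p z) + (1 - 1) * ln (g z)) * (ln (pmf p z) - ln (g z))) * exp ((1 - 1) * c * ln 2)
       + (\<Sum>z\<in>S. exp (1 * ln (pmf p z) + (1 - 1) * ln (g z))) * (exp ((1 - 1) * c * ln 2) * (c * ln 2)))
     = (\<Sum>z\<in>S. pmf p z * (ln (pmf p z) - ln (g z))) + c * ln 2"
    using pp by (simp add: S_def sum_pmf_eq_1)
  finally have der: "(F has_real_derivative ((\<Sum>z\<in>S. pmf p z * (ln (pmf p z) - ln (g z))) + c * ln 2)) (at 1)" .
  obtain d where d: "d > 0" "\<And>h. h > 0 \<Longrightarrow> h < d \<Longrightarrow> F 1 > F (1 + h)"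
    using DERIV_neg_dec_right[OF der] neg unfolding S_def by blast
  define a where "a = 1 + d / 2"
  have a1: "a > 1" using d by (simp add: a_def)
  have Fa: "F a < 1" using d(2)[of "d/2"] d(1) F1 by (simp add: a_def)
  have "(\<Sum>z\<in>UNIV. pmf p z powr a * g z powr (1 - a)) = (\<Sum>z\<in>S. pmf p z powr a * g z powr (1 - a))"
    by (rule sum.mono_neutral_right) (auto simp: S_def set_pmf_iff)
  also have "\<dots> = (\<Sum>z\<in>S. exp (a * ln (pmf p z) + (1 - a) * ln (g z)))"
  proof (rule sum.cong[OF refl])
    fix z assume "z \<in> S"
    then have "pmf p z > 0" "g z > 0" using pp gpos by (auto simp: S_def)
    then show "pmf p z powr a * g z powr (1 - a) = exp (a * ln (pmf p z) + (1 - a) * ln (g z))"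
      by (simp add: powr_def exp_add[symmetric] algebra_simps)
  qed
  finally have "(\<Sum>z\<in>UNIV. pmf p z powr a * g z powr (1 - a)) * 2 powr ((a - 1) * c) = F a"
    unfolding F_def by (simp add: powr_def algebra_simps)
  then show ?thesis using a1 Fa by auto
qed



lemma asymptotic_contra:
  fixes p :: "'z::finite pmf" and g :: "'z \<Rightarrow> real" and c aa eps :: real
  assumes g0: "\<And>z. g z \<ge> 0" and gpos: "\<And>z. z \<in> set_pmf p \<Longrightarrow> g z > 0"
    and neg: "(\<Sum>z\<in>set_pmf p. pmf p z * (ln (pmf p z) - ln (g z))) + c * ln 2 < 0"
    and ac: "aa < c" and eps: "eps < 1"
    and big: "\<And>n. n \<ge> nst \<Longrightarrow> \<exists>D. D \<subseteq> {xs. length xs = n} \<and>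
        1 - eps \<le> (\<Sum>xs\<in>D. pmf (replicate_pmf n p) xs) \<and>
        (\<Sum>xs\<in>D. (\<Prod>x\<leftarrow>xs. g x)) \<le> 2 powr (real n * aa)"
  shows False
proof -
  obtain a where a1: "a > 1" and r1: "(\<Sum>z\<in>UNIV. pmf p z powr a * g z powr (1 - a)) * 2 powr ((a - 1) * c) < 1"
    using exists_alpha[where g=g and p=p, OF g0 gpos neg] by blast
  define f where "f = (\<Sum>z\<in>UNIV. pmf p z powr a * g z powr (1 - a))"
  define r where "r = f * 2 powr ((a - 1) * c)"
  define u where "u = 2 powr (aa - c)"
  have f0: "f \<ge> 0" unfolding f_def by (simp add: sum_nonneg)
  have r0: "0 \<le> r" "r < 1" using r1 f0 by (simp_all add: r_def f_def)
  have u0: "0 < u" "u < 1" using ac powr_less_mono[of "aa - c" 0 2] by (simp_all add: u_def)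
  have bound: "1 - eps \<le> u ^ n + r ^ n" if nst: "n \<ge> nst" for n
  proof -
    obtain D where D: "D \<subseteq> {xs. length xs = n}"
      "1 - eps \<le> (\<Sum>xs\<in>D. pmf (replicate_pmf n p) xs)"
      "(\<Sum>xs\<in>D. (\<Prod>x\<leftarrow>xs. g x)) \<le> 2 powr (real n * aa)"
      using big[OF nst] by blast
    define t where "t = 2 powr (- (real n * c))"
    have t: "t > 0" by (simp add: t_def)
    have "1 - eps \<le> t * (\<Sum>xs\<in>D. (\<Prod>x\<leftarrow>xs. g x)) + t powr (1 - a) * f ^ n"
      using D(2) block_bound[where g=g and p=p, OF g0 gpos t a1 D(1)] unfolding f_def by linarith
    also have "\<dots> \<le> t * 2 powr (real n * aa) + t powr (1 - a) * f ^ n"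
      using D(3) t by (simp add: mult_left_mono)
    also have "t * 2 powr (real n * aa) = u ^ n"
      unfolding t_def u_def by (simp add: powr_add[symmetric] powr_realpow[symmetric] powr_powr algebra_simps)
    also have "t powr (1 - a) * f ^ n = r ^ n"
    proof -
      have "t powr (1 - a) = (2 powr ((a - 1) * c)) ^ n"
        unfolding t_def by (simp add: powr_realpow[symmetric] powr_powr algebra_simps)
      then show ?thesis by (simp add: r_def power_mult_distrib mult.commute)
    qed
    finally show ?thesis .
  qed
  have "(\<lambda>n. u ^ n + r ^ n) \<longlonglongrightarrow> 0 + 0"
    by (intro tendsto_add LIMSEQ_power_zero) (use u0 r0 in auto)
  then have "eventually (\<lambda>n. u ^ n + r ^ n < 1 - eps) sequentially"
    using eps by (intro order_tendstoD(2)) auto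
  then obtain N where N: "\<And>n. n \<ge> N \<Longrightarrow> u ^ n + r ^ n < 1 - eps"
    unfolding eventually_sequentially by blast
  show False using N[of "max N nst"] bound[of "max N nst"] by simp
qed



lemma fiber_sum_bound:
  fixes Q :: "'x \<Rightarrow> real" and f :: "'x \<Rightarrow> 'y" and w :: "'y \<Rightarrow> real" and M :: real
  assumes S: "finite S" and fib: "\<And>y. real (card {x\<in>S. f x = y}) \<le> M" and M0: "M \<ge> 0"
    and Qw: "\<And>x. x \<in> S \<Longrightarrow> Q x = w (f x)" and w0: "\<And>y. w y \<ge> 0"
    and T: "finite T" "f ` S \<subseteq> T" and wT: "sum w T \<le> 1"
  shows "sum Q S \<le> M"
proof -
  have "sum Q S = (\<Sum>y\<in>f ` S. sum Q {x\<in>S. f x = y})" by (rule sum.image_gen[OF S])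
  also have "\<dots> = (\<Sum>y\<in>f ` S. real (card {x\<in>S. f x = y}) * w y)"
    by (rule sum.cong[OF refl]) (simp add: Qw)
  also have "\<dots> \<le> (\<Sum>y\<in>f ` S. M * w y)"
    by (rule sum_mono) (simp add: fib mult_right_mono w0)
  also have "\<dots> \<le> (\<Sum>y\<in>T. M * w y)"
    by (rule sum_mono2[OF T(1) T(2)]) (simp add: M0 w0)
  also have "\<dots> = M * sum w T" by (simp add: sum_distrib_left)
  also have "\<dots> \<le> M" using wT M0 by (simp add: mult_left_le)
  finally show ?thesis .
qed

lemma ent_ln:
  "(\<Sum>z\<in>set_pmf q. pmf q z * ln (pmf q z)) = - entropy2 q * ln 2"
  unfolding entropy2_def log_def by (simp add: sum_distrib_right)

lemma marg_ln:
  fixes p :: "'z::finite pmf" and f :: "'z \<Rightarrow> 'y::finite"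
  shows "(\<Sum>z\<in>set_pmf p. pmf p z * ln (pmf (map_pmf f p) (f z))) = - entropy2 (map_pmf f p) * ln 2"
proof -
  let ?h = "\<lambda>b. ln (pmf (map_pmf f p) b)"
  have "(\<Sum>z\<in>set_pmf p. pmf p z * ?h (f z)) = (\<integral>z. ?h (f z) \<partial>measure_pmf p)"
    by (subst integral_measure_pmf_real[of "set_pmf p"]) (auto simp: mult.commute)
  also have "\<dots> = (\<integral>b. ?h b \<partial>measure_pmf (map_pmf f p))" by simp
  also have "\<dots> = (\<Sum>b\<in>set_pmf (map_pmf f p). pmf (map_pmf f p) b * ?h b)"
    by (subst integral_measure_pmf_real[of "set_pmf (map_pmf f p)"]) (auto simp: mult.commute)
  also have "\<dots> = - entropy2 (map_pmf f p) * ln 2" by (rule ent_ln)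
  finally show ?thesis .
qed

lemma card_le_powr:
  assumes "finite C" "C \<noteq> {}" "log 2 (real (card C)) / real n \<le> x" "n > 0"
  shows "real (card C) \<le> 2 powr (real n * x)"
proof -
  have c: "real (card C) > 0" using assms by (simp add: card_gt_0_iff)
  have "log 2 (real (card C)) \<le> real n * x" using assms by (simp add: field_simps)
  then have "2 powr log 2 (real (card C)) \<le> 2 powr (real n * x)" by simp
  then show ?thesis using c by simp
qed



theorem theorem2:
  fixes pX pK :: "('a::{finite,field} \<times> 'b::{finite,field}) pmf"
    and eps delta delta0 :: real
  assumes "delta0 > 0"
    and "0 < eps" and "eps < 1"
    and "0 < delta" and "delta \<le> delta0"
  shows "reliable_secure_region eps delta pX pK \<subseteq> sw_region pX"
proof
  fix R assume "R \<in> reliable_secure_region eps delta pX pK"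
  obtain R1 R2 where R: "R = (R1, R2)" by (cases R)
  have "\<exists>(C1 :: nat \<Rightarrow> nat set) (C2 :: nat \<Rightarrow> nat set)
      (Phi1 :: nat \<Rightarrow> 'a list \<Rightarrow> 'a list \<Rightarrow> nat) (Phi2 :: nat \<Rightarrow> 'b list \<Rightarrow> 'b list \<Rightarrow> nat)
      (Psi :: nat \<Rightarrow> 'a list \<Rightarrow> 'b list \<Rightarrow> nat \<Rightarrow> nat \<Rightarrow> 'a list \<times> 'b list)
      (M1 :: nat \<Rightarrow> nat set) (M2 :: nat \<Rightarrow> nat set)
      (phi1 :: nat \<Rightarrow> 'a list \<Rightarrow> nat) (phi2 :: nat \<Rightarrow> 'b list \<Rightarrow> nat)
      (psi :: nat \<Rightarrow> nat \<Rightarrow> nat \<Rightarrow> 'a list \<times> 'b list).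
       (\<forall>n. is_dse_system n (C1 n) (C2 n) (Phi1 n) (Phi2 n) (Psi n) (M1 n) (M2 n)
                (phi1 n) (phi2 n) (psi n)) \<and>
       (\<forall>\<gamma>>0. \<exists>n0. \<forall>n\<ge>n0.
          log 2 (real (card (C1 n))) / real n \<le> R1 + \<gamma> \<and>
          log 2 (real (card (C2 n))) / real n \<le> R2 + \<gamma> \<and>
          error_prob n pX (phi1 n) (phi2 n) (psi n) \<le> eps \<and>
          mutual_info2 (cipher_source_joint n pX pK (Phi1 n) (Phi2 n)) \<le> delta)"
    using \<open>R \<in> reliable_secure_region eps delta pX pK\<close> unfolding reliable_secure_region_def R by simp
  then obtain C1 C2 Phi1 Phi2 Psi M1 M2 phi1 phi2 psi where
    sys: "\<And>n. is_dse_system n (C1 n) (C2 n) (Phi1 n) (Phi2 n) (Psi n) (M1 n) (M2 n)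
                (phi1 n) (phi2 n) (psi n)" and
    rate: "\<And>\<gamma>. \<gamma> > 0 \<Longrightarrow> \<exists>n0. \<forall>n\<ge>n0.
          log 2 (real (card (C1 n))) / real n \<le> R1 + \<gamma> \<and>
          log 2 (real (card (C2 n))) / real n \<le> R2 + \<gamma> \<and>
          error_prob n pX (phi1 n) (phi2 n) (psi n) \<le> eps \<and>
          mutual_info2 (cipher_source_joint n pX pK (Phi1 n) (Phi2 n)) \<le> delta"
    by blast
  define D where "D n = {zs :: ('a \<times> 'b) list. length zs = n \<and>
      psi n (phi1 n (map fst zs)) (phi2 n (map snd zs)) = (map fst zs, map snd zs)}" for n
  have Dsub: "D n \<subseteq> {xs. length xs = n}" for n by (auto simp: D_def)
  have finD: "finite (D n)" for n using Dsub finite_len_lists finite_subset by blast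
  have prob: "1 - eps \<le> (\<Sum>xs\<in>D n. pmf (replicate_pmf n pX) xs)"
    if e: "error_prob n pX (phi1 n) (phi2 n) (psi n) \<le> eps" for n
  proof -
    let ?M = "measure_pmf (replicate_pmf n pX)"
    let ?E = "{zs :: ('a \<times> 'b) list. psi n (phi1 n (map fst zs)) (phi2 n (map snd zs)) \<noteq> (map fst zs, map snd zs)}"
    have err: "error_prob n pX (phi1 n) (phi2 n) (psi n) = measure ?M ?E"
      unfolding error_prob_def iid_block_def by (simp add: vimage_def)
    have c: "measure ?M (UNIV - ?E) = 1 - measure ?M ?E"
      using measure_pmf.prob_compl[of ?E "replicate_pmf n pX"] by simp
    have "measure ?M (UNIV - ?E) = measure ?M ((UNIV - ?E) \<inter> set_pmf (replicate_pmf n pX))"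
      by (rule measure_Int_set_pmf[symmetric])
    also have "\<dots> \<le> measure ?M (D n)"
      by (rule measure_pmf.finite_measure_mono) (auto simp: D_def set_replicate_pmf)
    also have "\<dots> = (\<Sum>xs\<in>D n. pmf (replicate_pmf n pX) xs)"
      by (rule measure_measure_pmf_finite[OF finD])
    finally show ?thesis using e err c by linarith
  qed
  have inj: "zs = zs'" if "zs \<in> D n" "zs' \<in> D n"
    "Phi1 n ka (map fst zs) = Phi1 n ka (map fst zs')"
    "Phi2 n kb (map snd zs) = Phi2 n kb (map snd zs')"
    "length ka = n" "length kb = n" for n zs zs' ka kb
  proof -
    have dec: "\<forall>ka kb x1 x2. length ka = n \<longrightarrow> length kb = n \<longrightarrow> length x1 = n \<longrightarrow> length x2 = n \<longrightarrow>
        Psi n ka kb (Phi1 n ka x1) (Phi2 n kb x2) = psi n (phi1 n x1) (phi2 n x2)"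
      using sys[of n] unfolding is_dse_system_def by blast
    have l: "length zs = n" "length zs' = n" using that(1,2) by (auto simp: D_def)
    have "(map fst zs, map snd zs) = psi n (phi1 n (map fst zs)) (phi2 n (map snd zs))"
      using that(1) by (simp add: D_def)
    also have "\<dots> = Psi n ka kb (Phi1 n ka (map fst zs)) (Phi2 n kb (map snd zs))"
      using dec that(5,6) l by simp
    also have "\<dots> = Psi n ka kb (Phi1 n ka (map fst zs')) (Phi2 n kb (map snd zs'))"
      using that(3,4) by simp
    also have "\<dots> = psi n (phi1 n (map fst zs')) (phi2 n (map snd zs'))"
      using dec that(5,6) l by simp
    also have "\<dots> = (map fst zs', map snd zs')"
      using that(2) by (simp add: D_def)
    finally have "map fst zs = map fst zs'" "map snd zs = map snd zs'" by auto
    then show ?thesis by (metis zip_map_fst_snd)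
  qed
  define k1 where "k1 n = replicate n (0::'a)" for n
  define k2 where "k2 n = replicate n (0::'b)" for n
  have C1a: "finite (C1 n)" "\<forall>k x. length k = n \<longrightarrow> length x = n \<longrightarrow> Phi1 n k x \<in> C1 n" for n
    using sys[of n] unfolding is_dse_system_def by blast+
  have C2a: "finite (C2 n)" "\<forall>k x. length k = n \<longrightarrow> length x = n \<longrightarrow> Phi2 n k x \<in> C2 n" for n
    using sys[of n] unfolding is_dse_system_def by blast+
  have C1: "finite (C1 n)" "C1 n \<noteq> {}" "\<And>x. length x = n \<Longrightarrow> Phi1 n (k1 n) x \<in> C1 n" for n
  proof -
    show "finite (C1 n)" by (rule C1a)
    show "\<And>x. length x = n \<Longrightarrow> Phi1 n (k1 n) x \<in> C1 n" using C1a(2)[of n] by (simp add: k1_def)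
    then show "C1 n \<noteq> {}" using length_replicate[of n "0::'a"] by blast
  qed
  have C2: "finite (C2 n)" "C2 n \<noteq> {}" "\<And>x. length x = n \<Longrightarrow> Phi2 n (k2 n) x \<in> C2 n" for n
  proof -
    show "finite (C2 n)" by (rule C2a)
    show "\<And>x. length x = n \<Longrightarrow> Phi2 n (k2 n) x \<in> C2 n" using C2a(2)[of n] by (simp add: k2_def)
    then show "C2 n \<noteq> {}" using length_replicate[of n "0::'b"] by blast
  qed
  define H where "H = entropy2 pX"
  define H1 where "H1 = entropy2 (map_pmf fst pX)"
  define H2 where "H2 = entropy2 (map_pmf snd pX)"
  have lnp: "(\<Sum>z\<in>set_pmf pX. pmf pX z * ln (pmf pX z)) = - H * ln 2"
    unfolding H_def by (rule ent_ln)
  have A: "R1 \<ge> H - H2"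
  proof (rule ccontr)
    assume "\<not> R1 \<ge> H - H2"
    define \<gamma> where "\<gamma> = (H - H2 - R1) / 4"
    have g: "\<gamma> > 0" using \<open>\<not> R1 \<ge> H - H2\<close> by (simp add: \<gamma>_def)
    obtain n0 where n0: "\<And>n. n \<ge> n0 \<Longrightarrow> log 2 (real (card (C1 n))) / real n \<le> R1 + \<gamma> \<and>
          log 2 (real (card (C2 n))) / real n \<le> R2 + \<gamma> \<and>
          error_prob n pX (phi1 n) (phi2 n) (psi n) \<le> eps \<and>
          mutual_info2 (cipher_source_joint n pX pK (Phi1 n) (Phi2 n)) \<le> delta"
      using rate[OF g] by blast
    let ?p2 = "map_pmf snd pX"
    let ?g = "\<lambda>z. pmf ?p2 (snd z)"
    show False
    proof (rule asymptotic_contra[where p = pX and g = ?g and c = "R1 + 2 * \<gamma>" and aa = "R1 + \<gamma>"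
          and eps = eps and nst = "max n0 1"])
      show "\<And>z. ?g z \<ge> 0" by simp
      show "\<And>z. z \<in> set_pmf pX \<Longrightarrow> ?g z > 0"
        by (simp add: pmf_positive)
      have "(\<Sum>z\<in>set_pmf pX. pmf pX z * (ln (pmf pX z) - ln (?g z)))
          = (\<Sum>z\<in>set_pmf pX. pmf pX z * ln (pmf pX z)) - (\<Sum>z\<in>set_pmf pX. pmf pX z * ln (?g z))"
        by (simp add: sum_subtractf right_diff_distrib)
      also have "\<dots> = - H * ln 2 + H2 * ln 2"
        using lnp marg_ln[of pX snd] unfolding H2_def by simp
      finally have S: "(\<Sum>z\<in>set_pmf pX. pmf pX z * (ln (pmf pX z) - ln (?g z))) = - H * ln 2 + H2 * ln 2" .
      have neg: "(R1 + 2 * \<gamma> - H + H2) * ln 2 < 0"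
        by (rule mult_neg_pos) (use g in \<open>simp_all add: \<gamma>_def field_simps\<close>)
      show "(\<Sum>z\<in>set_pmf pX. pmf pX z * (ln (pmf pX z) - ln (?g z))) + (R1 + 2 * \<gamma>) * ln 2 < 0"
        using neg unfolding S by (simp add: algebra_simps)
      show "R1 + \<gamma> < R1 + 2 * \<gamma>" using g by simp
      show "eps < 1" by fact
      fix n assume nn: "max n0 1 \<le> n"
      then have nge: "n \<ge> n0" "n > 0" by auto
      have fib: "real (card {zs \<in> D n. map snd zs = ys}) \<le> real (card (C1 n))" for ys
      proof -
        have "card {zs \<in> D n. map snd zs = ys} \<le> card (C1 n)"
        proof (rule card_inj_on_le[where f = "\<lambda>zs. Phi1 n (k1 n) (map fst zs)"])
          show "inj_on (\<lambda>zs. Phi1 n (k1 n) (map fst zs)) {zs \<in> D n. map snd zs = ys}"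
            by (rule inj_onI) (rule inj[where ka = "k1 n" and kb = "k2 n"], auto simp: k1_def k2_def)
          show "(\<lambda>zs. Phi1 n (k1 n) (map fst zs)) ` {zs \<in> D n. map snd zs = ys} \<subseteq> C1 n"
          proof
            fix c assume "c \<in> (\<lambda>zs. Phi1 n (k1 n) (map fst zs)) ` {zs \<in> D n. map snd zs = ys}"
            then obtain zs where "zs \<in> D n" "c = Phi1 n (k1 n) (map fst zs)" by blast
            moreover have "length (map fst zs) = n" using \<open>zs \<in> D n\<close> Dsub by auto
            ultimately show "c \<in> C1 n" using C1(3) by blast
          qed
          show "finite (C1 n)" by (rule C1(1))
        qed
        then show ?thesis by simp
      qed
      have sumQ: "(\<Sum>xs\<in>D n. (\<Prod>x\<leftarrow>xs. ?g x)) \<le> real (card (C1 n))"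
      proof (rule fiber_sum_bound[where f = "map snd" and w = "\<lambda>ys. (\<Prod>y\<leftarrow>ys. pmf ?p2 y)"
            and T = "{ys. length ys = n}"])
        show "finite (D n)" by (rule finD)
        show "\<And>ys. real (card {zs \<in> D n. map snd zs = ys}) \<le> real (card (C1 n))" by (rule fib)
        show "real (card (C1 n)) \<ge> 0" by simp
        show "\<And>x. x \<in> D n \<Longrightarrow> (\<Prod>x\<leftarrow>x. ?g x) = (\<Prod>y\<leftarrow>map snd x. pmf ?p2 y)"
          by (simp add: o_def)
        show "\<And>ys. (\<Prod>y\<leftarrow>ys. pmf ?p2 y) \<ge> 0" by (rule prod_list_map_nonneg) simp
        show "finite {ys::'b list. length ys = n}" by (rule finite_len_lists)
        show "map snd ` D n \<subseteq> {ys. length ys = n}" using Dsub[of n] by auto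
        have "(\<Sum>ys\<in>{ys::'b list. length ys = n}. (\<Prod>y\<leftarrow>ys. pmf ?p2 y)) = (\<Sum>b\<in>UNIV. pmf ?p2 b) ^ n"
          by (rule sum_lists_prod)
        also have "\<dots> = 1" by (simp add: sum_pmf_eq_1)
        finally show "(\<Sum>ys\<in>{ys::'b list. length ys = n}. (\<Prod>y\<leftarrow>ys. pmf ?p2 y)) \<le> 1" by simp
      qed
      have "real (card (C1 n)) \<le> 2 powr (real n * (R1 + \<gamma>))"
        using card_le_powr[OF C1(1,2)] n0[OF nge(1)] nge(2) by blast
      then show "\<exists>D. D \<subseteq> {xs. length xs = n} \<and>
          1 - eps \<le> (\<Sum>xs\<in>D. pmf (replicate_pmf n pX) xs) \<and>
          (\<Sum>xs\<in>D. (\<Prod>x\<leftarrow>xs. ?g x)) \<le> 2 powr (real n * (R1 + \<gamma>))"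
        using Dsub[of n] prob[of n] n0[OF nge(1)] sumQ by (intro exI[of _ "D n"]) auto
    qed
  qed
  have B: "R2 \<ge> H - H1"
  proof (rule ccontr)
    assume "\<not> R2 \<ge> H - H1"
    define \<gamma> where "\<gamma> = (H - H1 - R2) / 4"
    have g: "\<gamma> > 0" using \<open>\<not> R2 \<ge> H - H1\<close> by (simp add: \<gamma>_def)
    obtain n0 where n0: "\<And>n. n \<ge> n0 \<Longrightarrow> log 2 (real (card (C2 n))) / real n \<le> R2 + \<gamma> \<and>
          log 2 (real (card (C1 n))) / real n \<le> R1 + \<gamma> \<and>
          error_prob n pX (phi1 n) (phi2 n) (psi n) \<le> eps \<and>
          mutual_info2 (cipher_source_joint n pX pK (Phi1 n) (Phi2 n)) \<le> delta"
      using rate[OF g] by blast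
    let ?p1 = "map_pmf fst pX"
    let ?g = "\<lambda>z. pmf ?p1 (fst z)"
    show False
    proof (rule asymptotic_contra[where p = pX and g = ?g and c = "R2 + 2 * \<gamma>" and aa = "R2 + \<gamma>"
          and eps = eps and nst = "max n0 1"])
      show "\<And>z. ?g z \<ge> 0" by simp
      show "\<And>z. z \<in> set_pmf pX \<Longrightarrow> ?g z > 0"
        by (simp add: pmf_positive)
      have "(\<Sum>z\<in>set_pmf pX. pmf pX z * (ln (pmf pX z) - ln (?g z)))
          = (\<Sum>z\<in>set_pmf pX. pmf pX z * ln (pmf pX z)) - (\<Sum>z\<in>set_pmf pX. pmf pX z * ln (?g z))"
        by (simp add: sum_subtractf right_diff_distrib)
      also have "\<dots> = - H * ln 2 + H1 * ln 2"
        using lnp marg_ln[of pX fst] unfolding H1_def by simp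
      finally have S: "(\<Sum>z\<in>set_pmf pX. pmf pX z * (ln (pmf pX z) - ln (?g z))) = - H * ln 2 + H1 * ln 2" .
      have neg: "(R2 + 2 * \<gamma> - H + H1) * ln 2 < 0"
        by (rule mult_neg_pos) (use g in \<open>simp_all add: \<gamma>_def field_simps\<close>)
      show "(\<Sum>z\<in>set_pmf pX. pmf pX z * (ln (pmf pX z) - ln (?g z))) + (R2 + 2 * \<gamma>) * ln 2 < 0"
        using neg unfolding S by (simp add: algebra_simps)
      show "R2 + \<gamma> < R2 + 2 * \<gamma>" using g by simp
      show "eps < 1" by fact
      fix n assume nn: "max n0 1 \<le> n"
      then have nge: "n \<ge> n0" "n > 0" by auto
      have fib: "real (card {zs \<in> D n. map fst zs = ys}) \<le> real (card (C2 n))" for ys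
      proof -
        have "card {zs \<in> D n. map fst zs = ys} \<le> card (C2 n)"
        proof (rule card_inj_on_le[where f = "\<lambda>zs. Phi2 n (k2 n) (map snd zs)"])
          show "inj_on (\<lambda>zs. Phi2 n (k2 n) (map snd zs)) {zs \<in> D n. map fst zs = ys}"
            by (rule inj_onI) (rule inj[where ka = "k1 n" and kb = "k2 n"], auto simp: k2_def k1_def)
          show "(\<lambda>zs. Phi2 n (k2 n) (map snd zs)) ` {zs \<in> D n. map fst zs = ys} \<subseteq> C2 n"
          proof
            fix c assume "c \<in> (\<lambda>zs. Phi2 n (k2 n) (map snd zs)) ` {zs \<in> D n. map fst zs = ys}"
            then obtain zs where "zs \<in> D n" "c = Phi2 n (k2 n) (map snd zs)" by blast
            moreover have "length (map snd zs) = n" using \<open>zs \<in> D n\<close> Dsub by auto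
            ultimately show "c \<in> C2 n" using C2(3) by blast
          qed
          show "finite (C2 n)" by (rule C2(1))
        qed
        then show ?thesis by simp
      qed
      have sumQ: "(\<Sum>xs\<in>D n. (\<Prod>x\<leftarrow>xs. ?g x)) \<le> real (card (C2 n))"
      proof (rule fiber_sum_bound[where f = "map fst" and w = "\<lambda>ys. (\<Prod>y\<leftarrow>ys. pmf ?p1 y)"
            and T = "{ys. length ys = n}"])
        show "finite (D n)" by (rule finD)
        show "\<And>ys. real (card {zs \<in> D n. map fst zs = ys}) \<le> real (card (C2 n))" by (rule fib)
        show "real (card (C2 n)) \<ge> 0" by simp
        show "\<And>x. x \<in> D n \<Longrightarrow> (\<Prod>x\<leftarrow>x. ?g x) = (\<Prod>y\<leftarrow>map fst x. pmf ?p1 y)"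
          by (simp add: o_def)
        show "\<And>ys. (\<Prod>y\<leftarrow>ys. pmf ?p1 y) \<ge> 0" by (rule prod_list_map_nonneg) simp
        show "finite {ys::'a list. length ys = n}" by (rule finite_len_lists)
        show "map fst ` D n \<subseteq> {ys. length ys = n}" using Dsub[of n] by auto
        have "(\<Sum>ys\<in>{ys::'a list. length ys = n}. (\<Prod>y\<leftarrow>ys. pmf ?p1 y)) = (\<Sum>b\<in>UNIV. pmf ?p1 b) ^ n"
          by (rule sum_lists_prod)
        also have "\<dots> = 1" by (simp add: sum_pmf_eq_1)
        finally show "(\<Sum>ys\<in>{ys::'a list. length ys = n}. (\<Prod>y\<leftarrow>ys. pmf ?p1 y)) \<le> 1" by simp
      qed
      have "real (card (C2 n)) \<le> 2 powr (real n * (R2 + \<gamma>))"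
        using card_le_powr[OF C2(1,2)] n0[OF nge(1)] nge(2) by blast
      then show "\<exists>D. D \<subseteq> {xs. length xs = n} \<and>
          1 - eps \<le> (\<Sum>xs\<in>D. pmf (replicate_pmf n pX) xs) \<and>
          (\<Sum>xs\<in>D. (\<Prod>x\<leftarrow>xs. ?g x)) \<le> 2 powr (real n * (R2 + \<gamma>))"
        using Dsub[of n] prob[of n] n0[OF nge(1)] sumQ by (intro exI[of _ "D n"]) auto
    qed
  qed
  have C: "R1 + R2 \<ge> H"
  proof (rule ccontr)
    assume "\<not> R1 + R2 \<ge> H"
    define \<gamma> where "\<gamma> = (H - R1 - R2) / 4"
    have g: "\<gamma> > 0" using \<open>\<not> R1 + R2 \<ge> H\<close> by (simp add: \<gamma>_def)
    obtain n0 where n0: "\<And>n. n \<ge> n0 \<Longrightarrow> log 2 (real (card (C1 n))) / real n \<le> R1 + \<gamma> \<and>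
          log 2 (real (card (C2 n))) / real n \<le> R2 + \<gamma> \<and>
          error_prob n pX (phi1 n) (phi2 n) (psi n) \<le> eps \<and>
          mutual_info2 (cipher_source_joint n pX pK (Phi1 n) (Phi2 n)) \<le> delta"
      using rate[OF g] by blast
    let ?g = "\<lambda>z::'a \<times> 'b. (1::real)"
    show False
    proof (rule asymptotic_contra[where p = pX and g = ?g and c = "R1 + R2 + 3 * \<gamma>" and aa = "R1 + R2 + 2 * \<gamma>"
          and eps = eps and nst = "max n0 1"])
      show "\<And>z. ?g z \<ge> 0" by simp
      show "\<And>z. z \<in> set_pmf pX \<Longrightarrow> ?g z > 0" by simp
      have S: "(\<Sum>z\<in>set_pmf pX. pmf pX z * (ln (pmf pX z) - ln (?g z))) = - H * ln 2"
        using lnp by simp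
      have neg: "(R1 + R2 + 3 * \<gamma> - H) * ln 2 < 0"
        by (rule mult_neg_pos) (use g in \<open>simp_all add: \<gamma>_def field_simps\<close>)
      show "(\<Sum>z\<in>set_pmf pX. pmf pX z * (ln (pmf pX z) - ln (?g z))) + (R1 + R2 + 3 * \<gamma>) * ln 2 < 0"
        using neg unfolding S by (simp add: algebra_simps)
      show "R1 + R2 + 2 * \<gamma> < R1 + R2 + 3 * \<gamma>" using g by simp
      show "eps < 1" by fact
      fix n assume nn: "max n0 1 \<le> n"
      then have nge: "n \<ge> n0" "n > 0" by auto
      have "card (D n) \<le> card (C1 n \<times> C2 n)"
      proof (rule card_inj_on_le[where f = "\<lambda>zs. (Phi1 n (k1 n) (map fst zs), Phi2 n (k2 n) (map snd zs))"])
        show "inj_on (\<lambda>zs. (Phi1 n (k1 n) (map fst zs), Phi2 n (k2 n) (map snd zs))) (D n)"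
          by (rule inj_onI) (rule inj[where ka = "k1 n" and kb = "k2 n"], auto simp: k1_def k2_def)
        show "(\<lambda>zs. (Phi1 n (k1 n) (map fst zs), Phi2 n (k2 n) (map snd zs))) ` D n \<subseteq> C1 n \<times> C2 n"
        proof
          fix c assume "c \<in> (\<lambda>zs. (Phi1 n (k1 n) (map fst zs), Phi2 n (k2 n) (map snd zs))) ` D n"
          then obtain zs where "zs \<in> D n" "c = (Phi1 n (k1 n) (map fst zs), Phi2 n (k2 n) (map snd zs))" by blast
          moreover have "length (map fst zs) = n" "length (map snd zs) = n" using \<open>zs \<in> D n\<close> Dsub[of n] by auto
          ultimately show "c \<in> C1 n \<times> C2 n" using C1(3) C2(3) by blast
        qed
        show "finite (C1 n \<times> C2 n)" using C1(1) C2(1) by simp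
      qed
      then have cardD: "real (card (D n)) \<le> real (card (C1 n)) * real (card (C2 n))"
        by (simp add: card_cartesian_product flip: of_nat_mult)
      have "real (card (C1 n)) \<le> 2 powr (real n * (R1 + \<gamma>))"
        using card_le_powr[OF C1(1,2)] n0[OF nge(1)] nge(2) by blast
      moreover have "real (card (C2 n)) \<le> 2 powr (real n * (R2 + \<gamma>))"
        using card_le_powr[OF C2(1,2)] n0[OF nge(1)] nge(2) by blast
      ultimately have "real (card (C1 n)) * real (card (C2 n)) \<le> 2 powr (real n * (R1 + \<gamma>)) * 2 powr (real n * (R2 + \<gamma>))"
        by (intro mult_mono) auto
      also have "\<dots> = 2 powr (real n * (R1 + R2 + 2 * \<gamma>))"
        by (simp add: powr_add[symmetric] algebra_simps)
      finally have prodb: "real (card (C1 n)) * real (card (C2 n)) \<le> 2 powr (real n * (R1 + R2 + 2 * \<gamma>))" .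
      have sumQ: "(\<Sum>xs\<in>D n. (\<Prod>x\<leftarrow>xs. ?g x)) \<le> 2 powr (real n * (R1 + R2 + 2 * \<gamma>))"
      proof -
        have one: "(\<Prod>x\<leftarrow>xs. ?g x) = 1" for xs :: "('a \<times> 'b) list" by (induction xs) auto
        have "(\<Sum>xs\<in>D n. (\<Prod>x\<leftarrow>xs. ?g x)) = real (card (D n))" by (simp only: one) simp
        then show ?thesis using cardD prodb by linarith
      qed
      then show "\<exists>D. D \<subseteq> {xs. length xs = n} \<and>
          1 - eps \<le> (\<Sum>xs\<in>D. pmf (replicate_pmf n pX) xs) \<and>
          (\<Sum>xs\<in>D. (\<Prod>x\<leftarrow>xs. ?g x)) \<le> 2 powr (real n * (R1 + R2 + 2 * \<gamma>))"
        using Dsub[of n] prob[of n] n0[OF nge(1)] by (intro exI[of _ "D n"]) auto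
    qed
  qed
  show "R \<in> sw_region pX"
    using A B C unfolding R sw_region_def H_def H1_def H2_def by simp
qed

end
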